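(* Let $m$ be a positive integer, and let $\langle \mathscr{A} \mid \mathscr{R} \rangle$ be a generator-minimal strongly $C(2)$ presentation for a monoid which admits a strongly $C(m)$ presentation. Then $\langle \mathscr{A} \mid \mathscr{R} \rangle$ is a strongly $C(m)$ presentation.
   Context: A monoid presentation $\langle \mathscr{A} \mid \mathscr{R} \rangle$ consists of an alphabet $\mathscr{A}$ and a set $\mathscr{R} \subseteq \mathscr{A}^* \times \mathscr{A}^*$ of relations; the monoid presented is $\mathscr{A}^*$ modulo the smallest congruence $\equiv_\mathscr{R}$ containing $\mathscr{R}$. A relation word is a word occurring as one side of a relation. A piece is a word which occurs as a factor of two distinct relation words, or in two different (possibly overlapping) positions within one relation word; the empty word is always a piece. For a positive integer $n$ the presentation is $C(n)$ if no relation word can be written as a product of strictly fewer than $n$ pieces, and strongly $C(n)$ if it is $C(n)$ and in addition has no repeated relation words (no relation word occurs more than once as a side of a relation). A generator $a$ is redundant if it is $\equiv_\mathscr{R}$-equivalent to a product of zero or more other generators; the presentation is generator-minimal if it has no redundant generators. *)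

theory Defs
  imports Main
begin

definition is_presentation :: "'a set \<Rightarrow> ('a list \<times> 'a list) set \<Rightarrow> bool" where
  "is_presentation A R \<longleftrightarrow> R \<subseteq> lists A \<times> lists A"

inductive pres_eq :: "('a list \<times> 'a list) set \<Rightarrow> 'a list \<Rightarrow> 'a list \<Rightarrow> bool"
  for R where
  rel: "(u, v) \<in> R \<Longrightarrow> pres_eq R (x @ u @ y) (x @ v @ y)"
| refl: "pres_eq R w w"
| sym: "pres_eq R u v \<Longrightarrow> pres_eq R v u"
| trans: "pres_eq R u v \<Longrightarrow> pres_eq R v w \<Longrightarrow> pres_eq R u w"

definition rel_words :: "('a list \<times> 'a list) set \<Rightarrow> 'a list set" where
  "rel_words R = fst ` R \<union> snd ` R"

definition occurs_at :: "'a list \<Rightarrow> 'a list \<Rightarrow> nat \<Rightarrow> bool" where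
  "occurs_at p w i \<longleftrightarrow> i + length p \<le> length w \<and> take (length p) (drop i w) = p"

definition is_factor :: "'a list \<Rightarrow> 'a list \<Rightarrow> bool" where
  "is_factor p w \<longleftrightarrow> (\<exists>x y. w = x @ p @ y)"

definition piece :: "('a list \<times> 'a list) set \<Rightarrow> 'a list \<Rightarrow> bool" where
  "piece R p \<longleftrightarrow> p = [] \<or>
     (\<exists>u \<in> rel_words R. \<exists>v \<in> rel_words R. u \<noteq> v \<and> is_factor p u \<and> is_factor p v) \<or>
     (\<exists>u \<in> rel_words R. \<exists>i j. i \<noteq> j \<and> occurs_at p u i \<and> occurs_at p u j)"

definition C_cond :: "nat \<Rightarrow> ('a list \<times> 'a list) set \<Rightarrow> bool" where
  "C_cond n R \<longleftrightarrow> (\<forall>w \<in> rel_words R. \<forall>ps. (\<forall>p \<in> set ps. piece R p) \<and> concat ps = w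
                        \<longrightarrow> n \<le> length ps)"

definition no_repeated_rel_words :: "('a list \<times> 'a list) set \<Rightarrow> bool" where
  "no_repeated_rel_words R \<longleftrightarrow>
     (\<forall>r1 \<in> R. \<forall>r2 \<in> R. \<forall>b1 b2 :: bool.
        (if b1 then fst r1 else snd r1) = (if b2 then fst r2 else snd r2) \<longrightarrow> r1 = r2 \<and> b1 = b2)"

definition strongly_C :: "nat \<Rightarrow> ('a list \<times> 'a list) set \<Rightarrow> bool" where
  "strongly_C n R \<longleftrightarrow> C_cond n R \<and> no_repeated_rel_words R"

definition redundant_gen :: "'a set \<Rightarrow> ('a list \<times> 'a list) set \<Rightarrow> 'a \<Rightarrow> bool" where
  "redundant_gen A R a \<longleftrightarrow> (\<exists>w \<in> lists (A - {a}). pres_eq R [a] w)"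

definition generator_minimal :: "'a set \<Rightarrow> ('a list \<times> 'a list) set \<Rightarrow> bool" where
  "generator_minimal A R \<longleftrightarrow> (\<forall>a \<in> A. \<not> redundant_gen A R a)"

text \<open>The monoids presented by (A,R) and (B,S) are isomorphic: there is a map on
  words inducing a well-defined, injective, surjective monoid homomorphism
  A*/R \<rightarrow> B*/S.\<close>
definition presented_iso ::
  "'a set \<Rightarrow> ('a list \<times> 'a list) set \<Rightarrow> 'b set \<Rightarrow> ('b list \<times> 'b list) set \<Rightarrow> bool" where
  "presented_iso A R B S \<longleftrightarrow> (\<exists>h :: 'a list \<Rightarrow> 'b list.
     (\<forall>u \<in> lists A. h u \<in> lists B) \<and>
     (\<forall>u \<in> lists A. \<forall>v \<in> lists A. pres_eq R u v \<longleftrightarrow> pres_eq S (h u) (h v)) \<and>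
     (\<forall>u \<in> lists A. \<forall>v \<in> lists A. pres_eq S (h (u @ v)) (h u @ h v)) \<and>
     pres_eq S (h []) [] \<and>
     (\<forall>w \<in> lists B. \<exists>u \<in> lists A. pres_eq S (h u) w))"

end

theory Submission
  imports Defs
begin


lemma C_cond_mono: "C_cond n R \<Longrightarrow> k \<le> n \<Longrightarrow> C_cond k R"
  unfolding C_cond_def by (meson order_trans)

lemma C2_spec:
  assumes "C_cond 2 T" "w \<in> rel_words T" "\<forall>p\<in>set ps. piece T p" "concat ps = w"
  shows "2 \<le> length ps"
  using assms unfolding C_cond_def by blast

lemma rel_nonempty: assumes "C_cond 2 T" "w \<in> rel_words T" shows "w \<noteq> []"
proof
  assume "w = []"
  then show False using C2_spec[OF assms, of "[]"] by simp
qed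

lemma not_piece: assumes "C_cond 2 T" "w \<in> rel_words T" shows "\<not> piece T w"
proof
  assume "piece T w"
  then show False using C2_spec[OF assms, of "[w]"] by simp
qed

lemma rel_factor:
  assumes C: "C_cond 2 T" and s: "s \<in> rel_words T" and w: "w \<in> rel_words T" and e: "w = x @ s @ y"
  shows "x = [] \<and> y = []"
proof (cases "s = w")
  case True
  then have "length w = length x + length w + length y" using e by (metis length_append add.assoc)
  then show ?thesis by simp
next
  case False
  have f1: "is_factor s s" unfolding is_factor_def by (rule exI[of _ "[]"], rule exI[of _ "[]"]) simp
  have f2: "is_factor s w" unfolding is_factor_def using e by blast
  have "piece T s" unfolding piece_def using s w False f1 f2 by blast
  then show ?thesis using not_piece[OF C s] by blast
qed

lemma singleton_class_aux:
  assumes "pres_eq T u v" "\<forall>x s y. z = x @ s @ y \<longrightarrow> s \<notin> rel_words T"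
  shows "(u = z \<longrightarrow> v = z) \<and> (v = z \<longrightarrow> u = z)"
  using assms(1)
proof induction
  case (rel s s' x y)
  have "s \<in> rel_words T" "s' \<in> rel_words T" using rel unfolding rel_words_def by force+
  then show ?case using assms(2) by metis
next
  case (refl w) show ?case by simp
next
  case (sym u v) then show ?case by blast
next
  case (trans u v w) then show ?case by blast
qed

lemma singleton_class:
  "pres_eq T z v \<Longrightarrow> \<forall>x s y. z = x @ s @ y \<longrightarrow> s \<notin> rel_words T \<Longrightarrow> v = z"
  using singleton_class_aux by blast

lemma single_factor: "[a] = x @ s @ y \<Longrightarrow> s = [] \<or> s = [a]"
  by (cases x) (auto simp: Cons_eq_append_conv append_eq_Cons_conv)

lemma letter_class:
  assumes "C_cond 2 T" "[a] \<notin> rel_words T" "pres_eq T [a] z" shows "z = [a]"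
  using singleton_class[OF assms(3)] single_factor rel_nonempty[OF assms(1)] assms(2) by metis

lemma emp_class:
  assumes "C_cond 2 T" "pres_eq T [] z" shows "z = []"
  using singleton_class[OF assms(2)] rel_nonempty[OF assms(1)] by auto

lemma nr_ff: assumes "no_repeated_rel_words T" "(a,b) \<in> T" "(c,d) \<in> T" "a = c" shows "(a,b) = (c,d)"
proof -
  have "(if True then fst (a,b) else snd (a,b)) = (if True then fst (c,d) else snd (c,d)) \<longrightarrow> (a,b) = (c,d) \<and> True = True"
    using assms(1-3) unfolding no_repeated_rel_words_def by blast
  then show ?thesis using assms(4) by simp
qed

lemma nr_ss: assumes "no_repeated_rel_words T" "(a,b) \<in> T" "(c,d) \<in> T" "b = d" shows "(a,b) = (c,d)"
proof -
  have "(if False then fst (a,b) else snd (a,b)) = (if False then fst (c,d) else snd (c,d)) \<longrightarrow> (a,b) = (c,d) \<and> False = False"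
    using assms(1-3) unfolding no_repeated_rel_words_def by blast
  then show ?thesis using assms(4) by simp
qed

lemma nr_fs: assumes "no_repeated_rel_words T" "(a,b) \<in> T" "(c,d) \<in> T" "a = d" shows False
proof -
  have "(if True then fst (a,b) else snd (a,b)) = (if False then fst (c,d) else snd (c,d)) \<longrightarrow> (a,b) = (c,d) \<and> True = False"
    using assms(1-3) unfolding no_repeated_rel_words_def by blast
  then show ?thesis using assms(4) by simp
qed

lemma concat_single_id: "(\<forall>x\<in>set r. F x = [x]) \<Longrightarrow> concat (map F r) = r"
  by (induction r) auto

lemma pe_rel: "(u, v) \<in> T \<Longrightarrow> pres_eq T u v"
  using pres_eq.rel[of u v T "[]" "[]"] by simp

lemma pe_app1: "pres_eq T u u' \<Longrightarrow> pres_eq T (u @ v) (u' @ v)"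
proof (induction rule: pres_eq.induct)
  case (rel s s' x y)
  then show ?case using pres_eq.rel[of s s' T x "y @ v"] by simp
next
  case (refl w) show ?case by (rule pres_eq.refl)
next
  case (sym a b) from sym.IH show ?case by (rule pres_eq.sym)
next
  case (trans a b c) from trans.IH(1) trans.IH(2) show ?case by (rule pres_eq.trans)
qed

lemma pe_app2: "pres_eq T v v' \<Longrightarrow> pres_eq T (w @ v) (w @ v')"
proof (induction rule: pres_eq.induct)
  case (rel s s' x y)
  then show ?case using pres_eq.rel[of s s' T "w @ x" y] by simp
next
  case (refl w) show ?case by (rule pres_eq.refl)
next
  case (sym a b) from sym.IH show ?case by (rule pres_eq.sym)
next
  case (trans a b c) from trans.IH(1) trans.IH(2) show ?case by (rule pres_eq.trans)
qed

lemma pe_app: "pres_eq T u u' \<Longrightarrow> pres_eq T v v' \<Longrightarrow> pres_eq T (u @ v) (u' @ v')"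
  by (meson pe_app1 pe_app2 pres_eq.trans)

lemma pair_class_aux:
  assumes C: "C_cond 2 T" and nr: "no_repeated_rel_words T" and rr: "(r, r') \<in> T" and pe: "pres_eq T u v"
  shows "(u \<in> {r, r'} \<longrightarrow> v \<in> {r, r'}) \<and> (v \<in> {r, r'} \<longrightarrow> u \<in> {r, r'})"
  using pe
proof induction
  case (rel s s' x y)
  have s: "s \<in> rel_words T" "s' \<in> rel_words T" using rel unfolding rel_words_def by force+
  have r: "r \<in> rel_words T" "r' \<in> rel_words T" using rr unfolding rel_words_def by force+
  show ?case
  proof (intro conjI impI)
    assume a: "x @ s @ y \<in> {r, r'}"
    then have "x = [] \<and> y = []" using rel_factor[OF C s(1)] r by blast
    then have "s \<in> {r, r'}" using a by simp
    then have "s = r" using nr_fs[OF nr rel rr] by blast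
    then have "s' = r'" using nr_ff[OF nr rel rr] by simp
    then show "x @ s' @ y \<in> {r, r'}" using \<open>x = [] \<and> y = []\<close> by simp
  next
    assume a: "x @ s' @ y \<in> {r, r'}"
    then have "x = [] \<and> y = []" using rel_factor[OF C s(2)] r by blast
    then have "s' \<in> {r, r'}" using a by simp
    then have "s' = r'" using nr_fs[OF nr rr rel] by blast
    then have "s = r" using nr_ss[OF nr rel rr] by simp
    then show "x @ s @ y \<in> {r, r'}" using \<open>x = [] \<and> y = []\<close> by simp
  qed
next
  case (refl w) show ?case by simp
next
  case (sym u v) then show ?case by blast
next
  case (trans u v w) then show ?case by blast
qed

lemma pair_class:
  assumes "C_cond 2 T" "no_repeated_rel_words T" "(r, r') \<in> T" "pres_eq T u v" "u \<in> {r, r'}"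
  shows "v \<in> {r, r'}"
  using pair_class_aux[OF assms(1-4)] assms(5) by blast



theorem corollary3:
  fixes m :: nat
    and A :: "'a set" and R :: "('a list \<times> 'a list) set"
    and B :: "'b set" and S :: "('b list \<times> 'b list) set"
  assumes "0 < m"
    and "is_presentation A R"
    and "generator_minimal A R"
    and "strongly_C 2 R"
    and "is_presentation B S"
    and "strongly_C m S"
    and "presented_iso A R B S"
  shows "strongly_C m R"
proof (cases "m \<le> 2")
  case True
  then show ?thesis using assms(4) C_cond_mono unfolding strongly_C_def by blast
next
  case False
  have C2R: "C_cond 2 R" and nrR: "no_repeated_rel_words R" using assms(4) strongly_C_def by auto
  have CmS: "C_cond m S" and nrS: "no_repeated_rel_words S" using assms(6) strongly_C_def by auto
  have C2S: "C_cond 2 S" using C_cond_mono[OF CmS] False by simp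
  have RA: "R \<subseteq> lists A \<times> lists A" using assms(2) unfolding is_presentation_def by auto
  have SB: "S \<subseteq> lists B \<times> lists B" using assms(5) unfolding is_presentation_def by auto
  have relR_A: "\<And>w. w \<in> rel_words R \<Longrightarrow> w \<in> lists A" using RA unfolding rel_words_def by auto
  have relS_B: "\<And>w. w \<in> rel_words S \<Longrightarrow> w \<in> lists B" using SB unfolding rel_words_def by auto
  obtain h where h1: "\<forall>u\<in>lists A. h u \<in> lists B"
    and h2: "\<forall>u\<in>lists A. \<forall>v\<in>lists A. pres_eq R u v \<longleftrightarrow> pres_eq S (h u) (h v)"
    and h3: "\<forall>u\<in>lists A. \<forall>v\<in>lists A. pres_eq S (h (u @ v)) (h u @ h v)"
    and h4: "pres_eq S (h []) []"
    and h5: "\<forall>w\<in>lists B. \<exists>u\<in>lists A. pres_eq S (h u) w"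
    using assms(7) unfolding presented_iso_def by blast
  have partner: "\<And>T w. no_repeated_rel_words T \<Longrightarrow> w \<in> rel_words T \<Longrightarrow>
      \<exists>w'. ((w, w') \<in> T \<or> (w', w) \<in> T) \<and> pres_eq T w w' \<and> w \<noteq> w' \<and> w' \<in> rel_words T"
  proof -
    fix T :: "('c list \<times> 'c list) set" and w
    assume nr: "no_repeated_rel_words T" and w: "w \<in> rel_words T"
    then obtain w' where "(w, w') \<in> T \<or> (w', w) \<in> T" unfolding rel_words_def by force
    then show "\<exists>w'. ((w, w') \<in> T \<or> (w', w) \<in> T) \<and> pres_eq T w w' \<and> w \<noteq> w' \<and> w' \<in> rel_words T"
      using nr_fs[OF nr] pe_rel pres_eq.sym unfolding rel_words_def by (metis Un_iff fst_conv image_eqI snd_conv)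
  qed
  have R1: "\<And>a. a \<in> A \<Longrightarrow> [a] \<notin> rel_words R"
  proof
    fix a assume a: "a \<in> A" "[a] \<in> rel_words R"
    then obtain v where v: "(([a], v) \<in> R \<or> (v, [a]) \<in> R)" and pv: "pres_eq R [a] v"
      and vrel: "v \<in> rel_words R" using partner[OF nrR] by blast
    have vA: "v \<in> lists A" using relR_A vrel by blast
    show False
    proof (cases "a \<in> set v")
      case True
      then obtain x y where "v = x @ [a] @ y" by (metis split_list append_Cons append_Nil)
      then have "v = [a]" using rel_factor[OF C2R a(2) vrel, of x y] by simp
      then show False using v nr_fs[OF nrR] by blast
    next
      case False
      then have "v \<in> lists (A - {a})" using vA by auto
      then have "redundant_gen A R a" unfolding redundant_gen_def using pv by blast
      then show False using assms(3) a(1) unfolding generator_minimal_def by blast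
    qed
  qed
  have R1': "\<And>a z. a \<in> A \<Longrightarrow> pres_eq R [a] z \<Longrightarrow> z = [a]"
    using letter_class[OF C2R] R1 by blast
  have fex: "\<And>a. a \<in> A \<Longrightarrow> \<exists>b. b \<in> B \<and> pres_eq S (h [a]) [b]"
  proof -
    fix a assume a: "a \<in> A"
    have ha: "h [a] \<in> lists B" using h1 a by simp
    show "\<exists>b. b \<in> B \<and> pres_eq S (h [a]) [b]"
    proof (cases "h [a]")
      case Nil
      then have "pres_eq S (h [a]) (h [])" using h4 pres_eq.sym by simp
      then have "pres_eq R [a] []" using h2 a by simp
      then show ?thesis using R1'[OF a] by blast
    next
      case (Cons b w')
      have bB: "b \<in> B" and wB: "w' \<in> lists B" using ha Cons by auto
      show ?thesis
      proof (cases "w' = []")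
        case True then show ?thesis using Cons bB pres_eq.refl by auto
      next
        case False
        obtain t1 where t1: "t1 \<in> lists A" "pres_eq S (h t1) [b]" using h5 bB by force
        obtain t2 where t2: "t2 \<in> lists A" "pres_eq S (h t2) w'" using h5 wB by force
        have "pres_eq S (h [a]) (h t1 @ h t2)" using Cons pe_app[OF t1(2) t2(2)] pres_eq.sym by simp
        then have "pres_eq S (h [a]) (h (t1 @ t2))" using h3 t1(1) t2(1) pres_eq.sym pres_eq.trans by blast
        then have "pres_eq R [a] (t1 @ t2)" using h2 a t1(1) t2(1) by simp
        then have "t1 @ t2 = [a]" using R1'[OF a] by blast
        then have "t1 = [] \<or> t2 = []" by (cases t1) auto
        then show ?thesis
        proof
          assume "t1 = []"
          then have "pres_eq S [] [b]" using t1(2) h4 pres_eq.sym pres_eq.trans by blast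
          then show ?thesis using emp_class[OF C2S] by blast
        next
          assume "t2 = []"
          then have "pres_eq S [] w'" using t2(2) h4 pres_eq.sym pres_eq.trans by blast
          then show ?thesis using emp_class[OF C2S] False by blast
        qed
      qed
    qed
  qed
  define f where "f a = (SOME b. b \<in> B \<and> pres_eq S (h [a]) [b])" for a
  have f1: "\<And>a. a \<in> A \<Longrightarrow> f a \<in> B \<and> pres_eq S (h [a]) [f a]"
    unfolding f_def using fex by (rule someI_ex)
  have hmap: "\<And>t. t \<in> lists A \<Longrightarrow> pres_eq S (h t) (map f t)"
  proof -
    fix t show "t \<in> lists A \<Longrightarrow> pres_eq S (h t) (map f t)"
    proof (induction t)
      case Nil then show ?case using h4 by simp
    next
      case (Cons a t)
      have la: "[a] \<in> lists A" and lt: "t \<in> lists A" using Cons.prems by auto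
      have "pres_eq S (h ([a] @ t)) (h [a] @ h t)" using h3 la lt by blast
      moreover have "pres_eq S (h [a] @ h t) ([f a] @ map f t)"
        using pe_app[OF conjunct2[OF f1] Cons.IH[OF lt]] la by simp
      ultimately show ?case using pres_eq.trans by simp
    qed
  qed
  have iso: "\<And>u v. u \<in> lists A \<Longrightarrow> v \<in> lists A \<Longrightarrow> pres_eq R u v \<longleftrightarrow> pres_eq S (map f u) (map f v)"
    using h2 hmap pres_eq.sym pres_eq.trans by meson
  have finj: "inj_on f A"
  proof (rule inj_onI)
    fix a a' assume "a \<in> A" "a' \<in> A" "f a = f a'"
    then have "pres_eq R [a] [a']" using iso[of "[a]" "[a']"] pres_eq.refl by simp
    then show "a = a'" using R1' \<open>a \<in> A\<close> by blast
  qed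
  have mapinj: "\<And>u v. u \<in> lists A \<Longrightarrow> v \<in> lists A \<Longrightarrow> map f u = map f v \<Longrightarrow> u = v"
    using map_inj_on finj by (metis inj_on_subset in_listsD le_sup_iff subsetI)
  have fsurj: "\<And>b. b \<in> B \<Longrightarrow> \<exists>t\<in>lists A. pres_eq S [b] (map f t)"
  proof -
    fix b assume "b \<in> B"
    then obtain u where "u \<in> lists A" "pres_eq S (h u) [b]" using h5 by force
    then show "\<exists>t\<in>lists A. pres_eq S [b] (map f t)" using hmap pres_eq.sym pres_eq.trans by blast
  qed

  have R2: "\<And>u x q y z. u \<in> rel_words R \<Longrightarrow> u = x @ q @ y \<Longrightarrow> x @ y \<noteq> [] \<Longrightarrow> pres_eq R q z \<Longrightarrow> z = q"
  proof -
    fix u x q y z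
    assume u: "u \<in> rel_words R" "u = x @ q @ y" "x @ y \<noteq> []" "pres_eq R q z"
    have "\<forall>x' s y'. q = x' @ s @ y' \<longrightarrow> s \<notin> rel_words R"
    proof (intro allI impI)
      fix x' s y' assume "q = x' @ s @ y'"
      then have "u = (x @ x') @ s @ (y' @ y)" using u(2) by simp
      then show "s \<notin> rel_words R" using rel_factor[OF C2R _ u(1)] u(3) by blast
    qed
    then show "z = q" using singleton_class u(4) by blast
  qed
  have plain_class: "\<And>b z. [b] \<notin> rel_words S \<Longrightarrow> pres_eq S [b] z \<Longrightarrow> z = [b]"
    using letter_class[OF C2S] by blast
  have plain_img: "\<And>b. b \<in> B \<Longrightarrow> [b] \<notin> rel_words S \<Longrightarrow> \<exists>a\<in>A. f a = b"
  proof -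
    fix b assume b: "b \<in> B" "[b] \<notin> rel_words S"
    obtain t where t: "t \<in> lists A" "pres_eq S [b] (map f t)" using fsurj b(1) by blast
    then have "map f t = [b]" using plain_class b(2) by blast
    then show "\<exists>a\<in>A. f a = b" using t(1) by (auto simp: map_eq_Cons_conv)
  qed
  have long_plain: "\<And>r b. r \<in> rel_words S \<Longrightarrow> 2 \<le> length r \<Longrightarrow> b \<in> set r \<Longrightarrow> [b] \<notin> rel_words S"
  proof
    fix r b assume r: "r \<in> rel_words S" "2 \<le> length r" "b \<in> set r" "[b] \<in> rel_words S"
    then obtain x y where e: "r = x @ [b] @ y" by (metis split_list append_Cons append_Nil)
    then have "x = [] \<and> y = []" using rel_factor[OF C2S r(4) r(1) e] by simp
    then show False using e r(2) by simp
  qed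
  have long_img: "\<And>r. r \<in> rel_words S \<Longrightarrow> 2 \<le> length r \<Longrightarrow> \<exists>t\<in>lists A. map f t = r"
  proof -
    fix r assume r: "r \<in> rel_words S" "2 \<le> length r"
    define k where "k b = (SOME a. a \<in> A \<and> f a = b)" for b
    have k: "\<And>b. b \<in> set r \<Longrightarrow> k b \<in> A \<and> f (k b) = b"
    proof -
      fix b assume "b \<in> set r"
      then have "\<exists>a. a \<in> A \<and> f a = b" using plain_img long_plain[OF r] relS_B[OF r(1)] by blast
      then show "k b \<in> A \<and> f (k b) = b" unfolding k_def by (rule someI_ex)
    qed
    have "map f (map k r) = r" using k by (simp add: map_idI)
    moreover have "map k r \<in> lists A" using k by auto
    ultimately show "\<exists>t\<in>lists A. map f t = r" by blast
  qed
  define g where "g b = (SOME t. t \<in> lists A \<and> pres_eq S [b] (map f t))" for b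
  define \<nu> where "\<nu> b = (if b \<in> B then map f (g b) else [b])" for b
  define \<nu>s where "\<nu>s w = concat (map \<nu> w)" for w
  have g1: "\<And>b. b \<in> B \<Longrightarrow> g b \<in> lists A \<and> pres_eq S [b] (map f (g b))"
    unfolding g_def using fsurj by (metis (mono_tags, lifting) someI_ex)
  have \<nu>_plain: "\<And>b. b \<in> B \<Longrightarrow> [b] \<notin> rel_words S \<Longrightarrow> \<nu> b = [b]"
    using g1 plain_class unfolding \<nu>_def by auto
  have \<nu>_f: "\<And>a. a \<in> A \<Longrightarrow> \<nu> (f a) = [f a]"
  proof -
    fix a assume a: "a \<in> A"
    have fa: "f a \<in> B" using f1 a by blast
    have "pres_eq S (map f [a]) (map f (g (f a)))" using g1[OF fa] by simp
    then have "pres_eq R [a] (g (f a))" using iso a g1[OF fa] by simp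
    then have "g (f a) = [a]" using R1' a by blast
    then show "\<nu> (f a) = [f a]" unfolding \<nu>_def using fa by simp
  qed
  have \<nu>s_app: "\<And>x y. \<nu>s (x @ y) = \<nu>s x @ \<nu>s y" unfolding \<nu>s_def by simp
  have \<nu>s_map: "\<And>u. u \<in> lists A \<Longrightarrow> \<nu>s (map f u) = map f u"
  proof -
    fix u :: "'a list" show "u \<in> lists A \<Longrightarrow> \<nu>s (map f u) = map f u"
      by (induction u) (auto simp: \<nu>s_def \<nu>_f)
  qed
  have \<nu>s_long: "\<And>r. r \<in> rel_words S \<Longrightarrow> 2 \<le> length r \<Longrightarrow> \<nu>s r = r"
  proof -
    fix r assume r: "r \<in> rel_words S" "2 \<le> length r"
    have "\<forall>b\<in>set r. \<nu> b = [b]"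
      using \<nu>_plain long_plain[OF r] relS_B[OF r(1)] by auto
    then show "\<nu>s r = r" unfolding \<nu>s_def by (rule concat_single_id)
  qed
  have relS: "\<And>r r'. (r, r') \<in> S \<Longrightarrow> r \<in> rel_words S \<and> r' \<in> rel_words S"
    unfolding rel_words_def by force
  have mixed: "\<And>c r'. ([c], r') \<in> S \<or> (r', [c]) \<in> S \<Longrightarrow> 2 \<le> length r' \<Longrightarrow> \<nu>s [c] = \<nu>s r'"
  proof -
    fix c r' assume cr: "([c], r') \<in> S \<or> (r', [c]) \<in> S" and l: "2 \<le> length r'"
    have r'rel: "r' \<in> rel_words S" and crel: "[c] \<in> rel_words S" using cr relS by blast+
    have cB: "c \<in> B" using relS_B[OF crel] by simp
    have nr': "\<nu>s r' = r'" using \<nu>s_long[OF r'rel l] .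
    have gc: "g c \<in> lists A" "pres_eq S [c] (map f (g c))" using g1[OF cB] by auto
    have pc: "pres_eq S [c] r'" using cr pe_rel pres_eq.sym by blast
    have "map f (g c) \<in> {[c], r'} \<or> map f (g c) \<in> {r', [c]}"
      using cr pair_class[OF C2S nrS _ gc(2)] by blast
    then have "map f (g c) = [c] \<or> map f (g c) = r'" by blast
    then show "\<nu>s [c] = \<nu>s r'"
    proof
      assume e: "map f (g c) = [c]"
      then obtain a where ga: "g c = [a]" by (auto simp: map_eq_Cons_conv)
      obtain t where t: "t \<in> lists A" "map f t = r'" using long_img[OF r'rel l] by blast
      have "pres_eq S (map f [a]) (map f t)" using pc e ga t by simp
      then have "pres_eq R [a] t" using iso t(1) gc(1) ga by simp
      then have "t = [a]" using R1' gc(1) ga by simp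
      then have "length r' = 1" using t(2) by auto
      then show ?thesis using l by simp
    next
      assume "map f (g c) = r'"
      then show ?thesis using nr' cB unfolding \<nu>s_def \<nu>_def by simp
    qed
  qed
  have dual: "\<And>c c'. ([c], [c']) \<in> S \<Longrightarrow> \<nu> c = \<nu> c'"
  proof -
    fix c c' assume cc: "([c], [c']) \<in> S"
    have cB: "c \<in> B" "c' \<in> B" using relS_B[OF conjunct1[OF relS[OF cc]]] relS_B[OF conjunct2[OF relS[OF cc]]] by auto
    have gc: "g c \<in> lists A" "pres_eq S [c] (map f (g c))" using g1[OF cB(1)] by auto
    have gc': "g c' \<in> lists A" "pres_eq S [c'] (map f (g c'))" using g1[OF cB(2)] by auto
    have "map f (g c) \<in> {[c], [c']}" using pair_class[OF C2S nrS cc gc(2)] by blast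
    then obtain a1 where a1: "g c = [a1]" by (auto simp: map_eq_Cons_conv)
    have "map f (g c') \<in> {[c], [c']}" using pair_class[OF C2S nrS cc gc'(2)] by blast
    then obtain a2 where a2: "g c' = [a2]" by (auto simp: map_eq_Cons_conv)
    have "pres_eq S (map f (g c)) (map f (g c'))"
      using gc(2) gc'(2) pe_rel[OF cc] pres_eq.sym pres_eq.trans by meson
    then have "pres_eq R [a1] [a2]" using iso gc(1) gc'(1) a1 a2 by simp
    then have "[a2] = [a1]" using R1'[of a1 "[a2]"] gc(1) a1 by simp
    then have "a2 = a1" by simp
    then show "\<nu> c = \<nu> c'" unfolding \<nu>_def using cB a1 a2 by simp
  qed
  define S2 where "S2 = {p \<in> S. 2 \<le> length (fst p) \<and> 2 \<le> length (snd p)}"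
  have pairN: "\<And>r r'. (r, r') \<in> S \<Longrightarrow> pres_eq S2 (\<nu>s r) (\<nu>s r')"
  proof -
    fix r r' assume rr: "(r, r') \<in> S"
    have rel: "r \<in> rel_words S" "r' \<in> rel_words S" using relS[OF rr] by auto
    have ne: "r \<noteq> []" "r' \<noteq> []" using rel rel_nonempty[OF C2S] by auto
    show "pres_eq S2 (\<nu>s r) (\<nu>s r')"
    proof (cases "length r = 1")
      case True
      then obtain c where c: "r = [c]" by (cases r) auto
      show ?thesis
      proof (cases "length r' = 1")
        case True
        then obtain c' where c': "r' = [c']" by (cases r') auto
        have "\<nu> c = \<nu> c'" using dual rr c c' by simp
        then show ?thesis using c c' pres_eq.refl unfolding \<nu>s_def by simp
      next
        case False
        then have "2 \<le> length r'" using ne(2) by (metis One_nat_def Suc_1 Suc_leI length_greater_0_conv le_neq_implies_less not_less_eq_eq)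
        then have "\<nu>s r = \<nu>s r'" using mixed rr c by blast
        then show ?thesis using pres_eq.refl by simp
      qed
    next
      case False
      then have lr: "2 \<le> length r" using ne(1) by (metis One_nat_def Suc_1 Suc_leI length_greater_0_conv le_neq_implies_less not_less_eq_eq)
      show ?thesis
      proof (cases "length r' = 1")
        case True
        then obtain c' where c': "r' = [c']" by (cases r') auto
        have "\<nu>s r' = \<nu>s r" using mixed rr c' lr by blast
        then show ?thesis using pres_eq.refl by simp
      next
        case False
        then have "2 \<le> length r'" using ne(2) by (metis One_nat_def Suc_1 Suc_leI length_greater_0_conv le_neq_implies_less not_less_eq_eq)
        then have "(r, r') \<in> S2" unfolding S2_def using rr lr by simp
        then show ?thesis using pe_rel \<nu>s_long rel lr \<open>2 \<le> length r'\<close> by metis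
      qed
    qed
  qed
  have N: "\<And>z z'. pres_eq S z z' \<Longrightarrow> pres_eq S2 (\<nu>s z) (\<nu>s z')"
  proof -
    fix z z' assume "pres_eq S z z'"
    then show "pres_eq S2 (\<nu>s z) (\<nu>s z')"
    proof induction
      case (rel r r' x y)
      then show ?case using pe_app[OF pres_eq.refl pe_app[OF pairN[OF rel] pres_eq.refl]] \<nu>s_app by metis
    next
      case (refl w) show ?case by (rule pres_eq.refl)
    next
      case (sym a b) from sym.IH show ?case by (rule pres_eq.sym)
    next
      case (trans a b c) from trans.IH(1) trans.IH(2) show ?case by (rule pres_eq.trans)
    qed
  qed
  have S2S: "S2 \<subseteq> S" unfolding S2_def by auto
  have K: "\<And>u. u \<in> rel_words R \<Longrightarrow> map f u \<in> rel_words S"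
  proof -
    fix u assume u: "u \<in> rel_words R"
    obtain v where v: "pres_eq R u v" "u \<noteq> v" "v \<in> rel_words R" using partner[OF nrR u] by blast
    have uA: "u \<in> lists A" and vA: "v \<in> lists A" using relR_A u v(3) by auto
    have "pres_eq S (map f u) (map f v)" using iso uA vA v(1) by simp
    then have p2: "pres_eq S2 (map f u) (map f v)" using N \<nu>s_map uA vA by metis
    have neq: "map f v \<noteq> map f u" using mapinj uA vA v(2) by metis
    have "\<not> (\<forall>x s y. map f u = x @ s @ y \<longrightarrow> s \<notin> rel_words S2)"
      using singleton_class[OF p2] neq by blast
    then obtain x s y where e: "map f u = x @ s @ y" and s: "s \<in> rel_words S2" by blast
    obtain s' where ss: "(s, s') \<in> S2 \<or> (s', s) \<in> S2" using s unfolding rel_words_def by force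
    have sS: "(s, s') \<in> S \<or> (s', s) \<in> S" using ss S2S by blast
    have ls: "2 \<le> length s" "2 \<le> length s'" using ss unfolding S2_def by auto
    have srel: "s \<in> rel_words S" "s' \<in> rel_words S" using sS relS by blast+
    show "map f u \<in> rel_words S"
    proof (cases "x = [] \<and> y = []")
      case True then show ?thesis using e srel by simp
    next
      case False
      obtain x0 r0 where u1: "u = x0 @ r0" "x = map f x0" "s @ y = map f r0"
        using e map_eq_append_conv[of f u x "s @ y"] by metis
      obtain q y0 where u2: "r0 = q @ y0" "s = map f q" "y = map f y0"
        using u1(3) map_eq_append_conv[of f r0 s y] by metis
      have uq: "u = x0 @ q @ y0" using u1 u2 by simp
      have ne: "x0 @ y0 \<noteq> []" using False u1 u2 by auto
      have qA: "q \<in> lists A" using uA uq by auto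
      obtain t where t: "t \<in> lists A" "map f t = s'" using long_img[OF srel(2) ls(2)] by blast
      have "pres_eq S s s'" using sS pe_rel pres_eq.sym by blast
      then have "pres_eq R q t" using iso qA t u2 by simp
      then have "t = q" using R2[OF u uq ne] by blast
      then have "s' = s" using t u2 by simp
      then show ?thesis using sS nr_fs[OF nrS] by blast
    qed
  qed
  have P: "\<And>p. piece R p \<Longrightarrow> piece S (map f p)"
  proof -
    fix p assume "piece R p"
    then consider "p = []"
      | u v where "u \<in> rel_words R" "v \<in> rel_words R" "u \<noteq> v" "is_factor p u" "is_factor p v"
      | u i j where "u \<in> rel_words R" "i \<noteq> j" "occurs_at p u i" "occurs_at p u j"
      unfolding piece_def by blast
    then show "piece S (map f p)"
    proof cases
      case 1 then show ?thesis unfolding piece_def by simp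
    next
      case (2 u v)
      have "map f u \<noteq> map f v" using mapinj relR_A 2 by blast
      moreover have "is_factor (map f p) (map f u)" "is_factor (map f p) (map f v)"
        using 2(4,5) unfolding is_factor_def by force+
      ultimately show ?thesis unfolding piece_def using K 2 by blast
    next
      case (3 u i j)
      have "occurs_at (map f p) (map f u) i" "occurs_at (map f p) (map f u) j"
        using 3(3,4) unfolding occurs_at_def by (simp_all add: take_map drop_map)
      then show ?thesis unfolding piece_def using K 3 by blast
    qed
  qed
  have "C_cond m R"
    unfolding C_cond_def
  proof (intro ballI allI impI)
    fix w ps assume w: "w \<in> rel_words R" and ps: "(\<forall>p\<in>set ps. piece R p) \<and> concat ps = w"
    have "\<forall>p\<in>set (map (map f) ps). piece S p" using ps P by auto
    moreover have "concat (map (map f) ps) = map f w" using ps by (metis map_concat)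
    ultimately have "m \<le> length (map (map f) ps)"
      using CmS K[OF w] unfolding C_cond_def by blast
    then show "m \<le> length ps" by simp
  qed
  then show ?thesis using nrR unfolding strongly_C_def by simp
qed

end
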